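(* Suppose $\alpha$ is such that (H1) holds. Then there exists $z_{\min}$ in the interior of $I$ such that $\alpha'(z)<0$ on $[a,z_{\min})$, $\alpha'(z_{\min})=0$ and $\alpha'(z)>0$ on $(z_{\min},b]$; moreover, for every $z_2\in[a,b]$, $\partial_{z_1}\lambda(z,z_2)<0$ for $z\in[a,z_{\min})$, $\partial_{z_1}\lambda(z_{\min},z_2)=0$, and $\partial_{z_1}\lambda(z,z_2)>0$ for $z\in(z_{\min},b]$.
   Context: Let $D\subset\mathbb R^N$ be a bounded smooth domain, outward normal $\nu$; $I=(a,b)$; $m\in C^\beta(\bar D)$ positive nonconstant; $\alpha:\bar I\to(0,\infty)$ smooth. For $\alpha_1,\alpha_2>0$ let $\Theta_{\alpha_2}$ be the unique positive solution of $\alpha_2\Delta\Theta+(m-\Theta)\Theta=0$ in $D$, $\partial_\nu\Theta=0$, and $\Lambda(\alpha_1,\alpha_2)$ the smallest eigenvalue of $\alpha_1\Delta\Phi+(m-\Theta_{\alpha_2})\Phi+\Lambda\Phi=0$ in $D$, $\partial_\nu\Phi=0$; it is known that $\Lambda$ is smooth on $(0,\infty)^2$ and $\partial_{\alpha_1}\Lambda>0$. Set $\lambda(z_1,z_2)=\Lambda(\alpha(z_1),\alpha(z_2))$. (H1): there is $K_\lambda>0$ with $2K_\lambda\le\partial^2_{z_1}\lambda(z_1,z_2)\le2/K_\lambda$ on $I\times I$, and $\partial_{z_1}\lambda(a,a)<0$, $\partial_{z_1}\lambda(b,b)>0$. *)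

theory Defs
  imports "HOL-Analysis.Analysis"
begin

text \<open>C-infinity on an open set S of a Euclidean space: there is a family of
  continuous functions containing f and closed under taking partial derivatives
  along every basis direction (so all iterated partial derivatives exist and are
  continuous on S).\<close>
definition smooth_on :: "'a::euclidean_space set \<Rightarrow> ('a \<Rightarrow> real) \<Rightarrow> bool" where
  "smooth_on S f \<longleftrightarrow>
     (\<exists>P. f \<in> P \<and>
        (\<forall>g\<in>P. continuous_on S g \<and>
           (\<forall>i\<in>Basis. \<exists>g'\<in>P. \<forall>x\<in>S.
               ((\<lambda>t. g (x + t *\<^sub>R i)) has_real_derivative g' x) (at 0))))"

definition smooth_on_interval :: "real \<Rightarrow> real \<Rightarrow> (real \<Rightarrow> real) \<Rightarrow> bool" where
  "smooth_on_interval a b f \<longleftrightarrow>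
     (\<exists>P. f \<in> P \<and>
        (\<forall>g\<in>P. \<exists>g'\<in>P. \<forall>x\<in>{a..b}. (g has_real_derivative g' x) (at x within {a..b})))"

definition dI :: "real \<Rightarrow> real \<Rightarrow> (real \<Rightarrow> real) \<Rightarrow> real \<Rightarrow> real" where
  "dI a b f x = vector_derivative f (at x within {a..b})"

end

theory Submission
  imports Defs
begin

lemma partial1:
  fixes g :: "real \<times> real \<Rightarrow> real"
  assumes "((\<lambda>t. g (x + t *\<^sub>R (1,0))) has_real_derivative d) (at 0)"
  shows "((\<lambda>s. g (s, snd x)) has_real_derivative d) (at (fst x))"
proof -
  have e: "(\<lambda>t. g (x + t *\<^sub>R (1,0))) = (\<lambda>t. (\<lambda>s. g (s, snd x)) (t + fst x))"
    by (rule ext) (cases x, simp add: add.commute)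
  show ?thesis using assms unfolding e using DERIV_shift[of "\<lambda>s. g (s, snd x)" d 0 "fst x"] by simp
qed

lemma dI_eq:
  assumes "a < b" "x \<in> {a..b}" "(f has_real_derivative d) (at x within {a..b})"
  shows "dI a b f x = d"
  unfolding dI_def using vector_derivative_within_closed_interval[OF assms(1,2)] assms(3)
  by (simp add: has_real_derivative_iff_has_vector_derivative)

theorem lemma6p1:
  fixes a b :: real and \<alpha> :: "real \<Rightarrow> real" and \<Lambda> :: "real \<Rightarrow> real \<Rightarrow> real"
    and K :: real
  assumes ab: "a < b"
    and \<alpha>_smooth: "smooth_on_interval a b \<alpha>"
    and \<alpha>_pos: "\<forall>z\<in>{a..b}. \<alpha> z > 0"
    and \<Lambda>_smooth: "smooth_on {p::real\<times>real. 0 < fst p \<and> 0 < snd p} (\<lambda>p. \<Lambda> (fst p) (snd p))"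
    and \<Lambda>_mono: "\<forall>x>0. \<forall>y>0. deriv (\<lambda>s. \<Lambda> s y) x > 0"
    and K_pos: "K > 0"
    and H1_conv: "\<forall>z1\<in>{a<..<b}. \<forall>z2\<in>{a<..<b}.
        2 * K \<le> dI a b (\<lambda>z. dI a b (\<lambda>w. \<Lambda> (\<alpha> w) (\<alpha> z2)) z) z1 \<and>
        dI a b (\<lambda>z. dI a b (\<lambda>w. \<Lambda> (\<alpha> w) (\<alpha> z2)) z) z1 \<le> 2 / K"
    and H1_a: "dI a b (\<lambda>w. \<Lambda> (\<alpha> w) (\<alpha> a)) a < 0"
    and H1_b: "dI a b (\<lambda>w. \<Lambda> (\<alpha> w) (\<alpha> b)) b > 0"
  shows "\<exists>zmin\<in>{a<..<b}.
     (\<forall>z\<in>{a..<zmin}. dI a b \<alpha> z < 0) \<and> dI a b \<alpha> zmin = 0 \<and>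
     (\<forall>z\<in>{zmin<..b}. dI a b \<alpha> z > 0) \<and>
     (\<forall>z2\<in>{a..b}.
        (\<forall>z\<in>{a..<zmin}. dI a b (\<lambda>w. \<Lambda> (\<alpha> w) (\<alpha> z2)) z < 0) \<and>
        dI a b (\<lambda>w. \<Lambda> (\<alpha> w) (\<alpha> z2)) zmin = 0 \<and>
        (\<forall>z\<in>{zmin<..b}. dI a b (\<lambda>w. \<Lambda> (\<alpha> w) (\<alpha> z2)) z > 0))"
proof -
  define S where "S = {p::real\<times>real. 0 < fst p \<and> 0 < snd p}"
  obtain P where P1: "(\<lambda>p. \<Lambda> (fst p) (snd p)) \<in> P" and
    P2: "\<forall>g\<in>P. continuous_on S g \<and> (\<forall>i\<in>Basis. \<exists>g'\<in>P. \<forall>x\<in>S.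
               ((\<lambda>t. g (x + t *\<^sub>R i)) has_real_derivative g' x) (at 0))"
    using \<Lambda>_smooth unfolding smooth_on_def S_def by blast
  have B: "(1::real, 0::real) \<in> Basis" by (simp add: Basis_prod_def)
  have X: "\<forall>i\<in>Basis. \<exists>g'\<in>P. \<forall>x\<in>S. ((\<lambda>t. \<Lambda> (fst (x + t *\<^sub>R i)) (snd (x + t *\<^sub>R i))) has_real_derivative g' x) (at 0)"
    using bspec[OF P2 P1] by simp
  obtain L1 where L1P: "L1 \<in> P" and L1d: "\<forall>x\<in>S. ((\<lambda>t. \<Lambda> (fst (x + t *\<^sub>R (1,0))) (snd (x + t *\<^sub>R (1,0)))) has_real_derivative L1 x) (at 0)"
    using X B by blast
  obtain L11 where L11d: "\<forall>x\<in>S. ((\<lambda>t. L1 (x + t *\<^sub>R (1,0))) has_real_derivative L11 x) (at 0)"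
    using P2 L1P B by blast
  have L1cont: "continuous_on S L1" using P2 L1P by blast
  have dL: "((\<lambda>s. \<Lambda> s y) has_real_derivative L1 (s,y)) (at s)" if "0 < s" "0 < y" for s y
    using partial1[of "\<lambda>p. \<Lambda> (fst p) (snd p)" "(s,y)" "L1 (s,y)"] L1d that by (simp add: S_def)
  have dL1: "((\<lambda>s. L1 (s,y)) has_real_derivative L11 (s,y)) (at s)" if "0 < s" "0 < y" for s y
    using partial1[of "L1" "(s,y)" "L11 (s,y)"] L11d that by (simp add: S_def)
  have L1pos: "L1 (s,y) > 0" if "0 < s" "0 < y" for s y
    using \<Lambda>_mono that DERIV_imp_deriv[OF dL[OF that]] by metis
  obtain Q where Q1: "\<alpha> \<in> Q" and Q2: "\<forall>g\<in>Q. \<exists>g'\<in>Q. \<forall>x\<in>{a..b}. (g has_real_derivative g' x) (at x within {a..b})"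
    using \<alpha>_smooth unfolding smooth_on_interval_def by blast
  obtain \<alpha>1 where A1Q: "\<alpha>1 \<in> Q" and A1: "\<forall>x\<in>{a..b}. (\<alpha> has_real_derivative \<alpha>1 x) (at x within {a..b})"
    using Q1 Q2 by blast
  obtain \<alpha>2 where A2: "\<forall>x\<in>{a..b}. (\<alpha>1 has_real_derivative \<alpha>2 x) (at x within {a..b})"
    using A1Q Q2 by blast
  have contA: "continuous_on {a..b} \<alpha>"
    using A1 DERIV_continuous continuous_on_eq_continuous_within by blast
  have contA1: "continuous_on {a..b} \<alpha>1"
    using A2 DERIV_continuous continuous_on_eq_continuous_within by blast
  have dIa: "dI a b \<alpha> z = \<alpha>1 z" if "z \<in> {a..b}" for z
    using dI_eq[OF ab that] A1 that by blast
  have dF: "((\<lambda>w. \<Lambda> (\<alpha> w) y) has_real_derivative L1 (\<alpha> z, y) * \<alpha>1 z) (at z within {a..b})"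
    if "0 < y" "z \<in> {a..b}" for y z
    using DERIV_chain2[OF dL[OF _ that(1)], of \<alpha> z] A1 \<alpha>_pos that by blast
  have dIF: "dI a b (\<lambda>w. \<Lambda> (\<alpha> w) y) z = L1 (\<alpha> z, y) * \<alpha>1 z" if "0 < y" "z \<in> {a..b}" for y z
    using dI_eq[OF ab that(2) dF[OF that]] .
  have aa: "a \<in> {a..b}" "b \<in> {a..b}" using ab by auto
  have A1a: "\<alpha>1 a < 0"
  proof -
    have "L1 (\<alpha> a, \<alpha> a) * \<alpha>1 a < 0" using H1_a dIF[OF _ aa(1), of "\<alpha> a"] \<alpha>_pos aa by simp
    moreover have "L1 (\<alpha> a, \<alpha> a) > 0" using L1pos \<alpha>_pos aa by blast
    ultimately show ?thesis by (simp add: mult_less_0_iff)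
  qed
  have A1b: "\<alpha>1 b > 0"
  proof -
    have "L1 (\<alpha> b, \<alpha> b) * \<alpha>1 b > 0" using H1_b dIF[OF _ aa(2), of "\<alpha> b"] \<alpha>_pos aa by simp
    moreover have "L1 (\<alpha> b, \<alpha> b) > 0" using L1pos \<alpha>_pos aa by blast
    ultimately show ?thesis by (simp add: zero_less_mult_iff)
  qed
  define m where "m = (a + b) / 2"
  have m: "m \<in> {a<..<b}" using ab by (simp add: m_def)
  define c where "c = \<alpha> m"
  have c: "c > 0" using m \<alpha>_pos by (simp add: c_def)
  define h where "h z = L1 (\<alpha> z, c) * \<alpha>1 z" for z
  define h' where "h' z = (L11 (\<alpha> z, c) * \<alpha>1 z) * \<alpha>1 z + L1 (\<alpha> z, c) * \<alpha>2 z" for z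
  have hd: "(h has_real_derivative h' z) (at z within {a..b})" if "z \<in> {a..b}" for z
  proof -
    have "((\<lambda>z. L1 (\<alpha> z, c)) has_real_derivative L11 (\<alpha> z, c) * \<alpha>1 z) (at z within {a..b})"
      using DERIV_chain2[OF dL1[OF _ c], of \<alpha> z] A1 \<alpha>_pos that by blast
    from DERIV_mult[OF this, of \<alpha>1 "\<alpha>2 z"] A2 that show ?thesis unfolding h_def[abs_def] h'_def
      by (auto simp: mult.commute)
  qed
  have hcont: "continuous_on {a..b} h"
    using hd DERIV_continuous continuous_on_eq_continuous_within by blast
  have h'pos: "h' z > 0" if "z \<in> {a<..<b}" for z
  proof -
    have zI: "z \<in> {a..b}" using that by auto
    have "((\<lambda>z. dI a b (\<lambda>w. \<Lambda> (\<alpha> w) (\<alpha> m)) z) has_real_derivative h' z) (at z within {a..b})"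
      by (rule has_field_derivative_transform_within[OF hd[OF zI] zero_less_one zI])
         (simp add: dIF c[unfolded c_def] h_def c_def)
    then have "dI a b (\<lambda>z. dI a b (\<lambda>w. \<Lambda> (\<alpha> w) (\<alpha> m)) z) z = h' z"
      using dI_eq[OF ab zI] by blast
    moreover have "2 * K \<le> dI a b (\<lambda>z. dI a b (\<lambda>w. \<Lambda> (\<alpha> w) (\<alpha> m)) z) z"
      using H1_conv that m by blast
    ultimately show ?thesis using K_pos by linarith
  qed
  have hmono: "h x < h y" if "a \<le> x" "x < y" "y \<le> b" for x y
  proof (rule DERIV_pos_imp_increasing_open[OF that(2)])
    fix t assume t: "x < t" "t < y"
    then have "t \<in> {a<..<b}" using that by auto
    then show "\<exists>l. DERIV h t :> l \<and> l > 0"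
      using hd[of t] h'pos[of t] at_within_Icc_at[of a t b] by auto
  next
    show "continuous_on {x..y} h" using hcont by (rule continuous_on_subset) (use that in auto)
  qed
  have ha: "h a < 0" using A1a L1pos[of "\<alpha> a" c] \<alpha>_pos aa c by (simp add: h_def mult_less_0_iff)
  have hb: "h b > 0" using A1b L1pos[of "\<alpha> b" c] \<alpha>_pos aa c by (simp add: h_def)
  obtain zm where zm: "a \<le> zm" "zm \<le> b" "h zm = 0"
    using IVT'[of h a 0 b] ha hb ab hcont by auto
  have zmI: "zm \<in> {a<..<b}" using zm ha hb by (auto simp: less_le)
  have sgn: "\<And>z. z \<in> {a..b} \<Longrightarrow> (\<alpha>1 z < 0 \<longleftrightarrow> h z < 0) \<and> (\<alpha>1 z = 0 \<longleftrightarrow> h z = 0) \<and> (\<alpha>1 z > 0 \<longleftrightarrow> h z > 0)"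
  proof -
    fix z assume z: "z \<in> {a..b}"
    have "L1 (\<alpha> z, c) > 0" using L1pos \<alpha>_pos z c by blast
    then show "(\<alpha>1 z < 0 \<longleftrightarrow> h z < 0) \<and> (\<alpha>1 z = 0 \<longleftrightarrow> h z = 0) \<and> (\<alpha>1 z > 0 \<longleftrightarrow> h z > 0)"
      by (simp add: h_def mult_less_0_iff zero_less_mult_iff)
  qed
  have neg: "\<alpha>1 z < 0" if "z \<in> {a..<zm}" for z
    using sgn[of z] hmono[of z zm] that zm by auto
  have pos: "\<alpha>1 z > 0" if "z \<in> {zm<..b}" for z
    using sgn[of z] hmono[of zm z] that zm by auto
  have zero: "\<alpha>1 zm = 0" using sgn[of zm] zm by auto
  show ?thesis
  proof (rule bexI[OF _ zmI], intro conjI ballI)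
    fix z assume "z \<in> {a..<zm}" then show "dI a b \<alpha> z < 0" using neg dIa zm by auto
  next
    show "dI a b \<alpha> zm = 0" using zero dIa zm by auto
  next
    fix z assume "z \<in> {zm<..b}" then show "dI a b \<alpha> z > 0" using pos dIa zm by auto
  next
    fix z2 z assume z2: "z2 \<in> {a..b}" and z: "z \<in> {a..<zm}"
    have "L1 (\<alpha> z, \<alpha> z2) > 0" using L1pos \<alpha>_pos z z2 zm by auto
    then show "dI a b (\<lambda>w. \<Lambda> (\<alpha> w) (\<alpha> z2)) z < 0"
      using dIF[of "\<alpha> z2" z] \<alpha>_pos z2 z zm neg[OF z] by (auto simp: mult_less_0_iff)
  next
    fix z2 assume z2: "z2 \<in> {a..b}"
    show "dI a b (\<lambda>w. \<Lambda> (\<alpha> w) (\<alpha> z2)) zm = 0"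
      using dIF[of "\<alpha> z2" zm] \<alpha>_pos z2 zm zero by auto
  next
    fix z2 z assume z2: "z2 \<in> {a..b}" and z: "z \<in> {zm<..b}"
    have "L1 (\<alpha> z, \<alpha> z2) > 0" using L1pos \<alpha>_pos z z2 zm by auto
    then show "dI a b (\<lambda>w. \<Lambda> (\<alpha> w) (\<alpha> z2)) z > 0"
      using dIF[of "\<alpha> z2" z] \<alpha>_pos z2 z zm pos[OF z] by auto
  qed
qed

end
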